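(* Consider the following TDCD process. Let $N\ge 1$ silos each contain $K\ge 1$ clients, let $D=D_1+\dots+D_N$, and write every $\theta\in\mathbb{R}^D$ in blocks $\theta=[\theta_{(1)}^T,\dots,\theta_{(N)}^T]^T$ with $\theta_{(j)}\in\mathbb{R}^{D_j}$. Fix an integer $Q\ge1$ and $\eta>0$. Client $k$ of silo $j$ holds $\theta^t_{k,j}\in\mathbb{R}^{D_j}$. Define $\tilde\theta^t_{(j)}=\frac1K\sum_k\theta^t_{k,j}$. At every multiple $t$ of $Q$, each $\theta^t_{k,j}$ is reset to $\tilde\theta^t_{(j)}$. Define $y^t_{k,j}\in\mathbb{R}^D$ by $(y^t_{k,j})_{(j)}=\theta^t_{k,j}$ and $(y^t_{k,j})_{(l)}=\tilde\theta^{t_0}_{(l)}$ for $l\ne j$, where $t_0$ is as defined below. The update is $\theta^{t+1}_{k,j}=\theta^t_{k,j}-\eta\, g_{k,j}(y^t_{k,j})$, where $g_{k,j}(\cdot)\in\mathbb{R}^{D_j}$ is the stochastic partial gradient computed by client $k$ of silo $j$ on the current minibatch. Let $t_0$ be the most recent iteration prior to iteration $t$ in which the hubs exchanged information and sent new models to the clients, i.e., the most recent synchronization iteration (with $t-t_0\le Q$). Then for every silo $j$, $$\frac1K\sum_{k=1}^K\|\tilde\theta^t_{(j)}-\theta^t_{k,j}\|^2\le\frac{Q\eta^2}{K}\sum_{k=1}^K\sum_{\tau=t_0}^{t-1}\|g_{k,j}(y^\tau_{k,j})\|^2.$$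
   Context: Here $\theta^t_{k,j}$ is the block-$j$ component of $y^t_{k,j}$; the paper denotes it $y^t_{k,j,(j)}$. *)

theory Defs
  imports Complex_Main
begin

text \<open>Clients are indexed by k < K, silos by j < N.
  A block vector in R^{D_j} is a function nat => real of which only the
  components i < D_j matter. A full vector theta in R^D is given blockwise as
  a function nat => (nat => real): block l, component i.
  A run of TDCD is a function w :: nat => nat => nat => nat => real,
  w t k j = value held by client k of silo j at iteration t, BEFORE the
  reset that takes place when t is a multiple of Q.\<close>

definition sqnorm :: "nat \<Rightarrow> (nat \<Rightarrow> real) \<Rightarrow> real" where
  "sqnorm d v = (\<Sum>i<d. (v i)\<^sup>2)"

definition cavg :: "nat \<Rightarrow> (nat \<Rightarrow> nat \<Rightarrow> nat \<Rightarrow> real) \<Rightarrow> nat \<Rightarrow> nat \<Rightarrow> real" where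
  "cavg K W j = (\<lambda>i. (1 / real K) * (\<Sum>k<K. W k j i))"

definition tdcd_state :: "nat \<Rightarrow> nat \<Rightarrow> (nat \<Rightarrow> nat \<Rightarrow> nat \<Rightarrow> nat \<Rightarrow> real)
    \<Rightarrow> nat \<Rightarrow> nat \<Rightarrow> nat \<Rightarrow> nat \<Rightarrow> real" where
  "tdcd_state Q K w t = (if Q dvd t then (\<lambda>k j. cavg K (w t) j) else w t)"

definition last_sync :: "nat \<Rightarrow> nat \<Rightarrow> nat" where
  "last_sync Q tau = Q * (tau div Q)"

definition tdcd_y :: "nat \<Rightarrow> nat \<Rightarrow> (nat \<Rightarrow> nat \<Rightarrow> nat \<Rightarrow> nat \<Rightarrow> real)
    \<Rightarrow> nat \<Rightarrow> nat \<Rightarrow> nat \<Rightarrow> nat \<Rightarrow> nat \<Rightarrow> real" where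
  "tdcd_y Q K w t k j = (\<lambda>l. if l = j then tdcd_state Q K w t k j
                            else cavg K (w (last_sync Q t)) l)"

end

theory Submission
  imports Defs "HOL-Analysis.Analysis"
begin

lemma var_le:
  fixes a :: "nat \<Rightarrow> real"
  assumes "K \<ge> 1"
  shows "(\<Sum>k<K. ((1 / real K) * (\<Sum>k<K. a k) - a k)\<^sup>2) \<le> (\<Sum>k<K. (a k)\<^sup>2)"
proof -
  define m where "m = (1 / real K) * (\<Sum>k<K. a k)"
  have S: "(\<Sum>k<K. a k) = real K * m" using assms by (simp add: m_def)
  have "(\<Sum>k<K. (m - a k)\<^sup>2) = (\<Sum>k<K. (a k)\<^sup>2 - 2 * m * a k + m\<^sup>2)"
    by (rule sum.cong) (auto simp: power2_eq_square algebra_simps)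
  also have "\<dots> = (\<Sum>k<K. (a k)\<^sup>2) - 2 * m * (\<Sum>k<K. a k) + real K * m\<^sup>2"
    by (simp add: sum.distrib sum_subtractf sum_distrib_left)
  also have "\<dots> = (\<Sum>k<K. (a k)\<^sup>2) - real K * m\<^sup>2" using S by (simp add: power2_eq_square)
  also have "\<dots> \<le> (\<Sum>k<K. (a k)\<^sup>2)" by simp
  finally show ?thesis by (simp add: m_def)
qed

theorem lemma5:
  fixes N K Q t t0 j :: nat and D :: "nat \<Rightarrow> nat" and \<eta> :: real
    and w :: "nat \<Rightarrow> nat \<Rightarrow> nat \<Rightarrow> nat \<Rightarrow> real"
    and g :: "nat \<Rightarrow> nat \<Rightarrow> nat \<Rightarrow> (nat \<Rightarrow> nat \<Rightarrow> real) \<Rightarrow> nat \<Rightarrow> real"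
  assumes "N \<ge> 1" and "K \<ge> 1" and "Q \<ge> 1" and "\<eta> > 0"
    and update: "\<And>\<tau> k l. k < K \<Longrightarrow> l < N \<Longrightarrow>
       w (Suc \<tau>) k l = (\<lambda>i. tdcd_state Q K w \<tau> k l i - \<eta> * g \<tau> k l (tdcd_y Q K w \<tau> k l) i)"
    and "j < N" and "t \<ge> 1" and "t0 = Q * ((t - 1) div Q)"
  shows "(1 / real K) * (\<Sum>k<K. sqnorm (D j) (\<lambda>i. cavg K (w t) j i - w t k j i))
     \<le> (real Q * \<eta>\<^sup>2 / real K) *
        (\<Sum>k<K. \<Sum>\<tau>=t0..<t. sqnorm (D j) (g \<tau> k j (tdcd_y Q K w \<tau> k j)))"
proof -
  define gg where "gg \<tau> k i = g \<tau> k j (tdcd_y Q K w \<tau> k j) i" for \<tau> k i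
  define c where "c = cavg K (w t0) j"
  have dv: "Q dvd t0" using assms(8) by simp
  have t0le: "t0 \<le> t - 1" using assms(8) by (simp add: mult.commute)
  have tlt: "t - 1 < t0 + Q"
  proof -
    have "t - 1 = Q * ((t - 1) div Q) + (t - 1) mod Q" by simp
    moreover have "(t - 1) mod Q < Q" using assms(3) by simp
    ultimately show ?thesis using assms(8) by linarith
  qed
  have IND: "w (t0 + Suc m) k j = (\<lambda>i. c i - \<eta> * (\<Sum>\<tau>=t0..<t0 + Suc m. gg \<tau> k i))"
    if "m < t - t0" "k < K" for m k
    using that
  proof (induction m)
    case 0
    then show ?case using update[OF 0(2) assms(6), of t0] dv
      by (simp add: tdcd_state_def c_def gg_def)
  next
    case (Suc m)
    have nd: "\<not> Q dvd (t0 + Suc m)"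
    proof
      assume "Q dvd (t0 + Suc m)"
      then have "Q dvd Suc m" using dv by (metis dvd_add_right_iff)
      moreover have "Suc m < Q" using Suc(2) tlt by linarith
      ultimately show False by (simp add: nat_dvd_not_less)
    qed
    have "w (t0 + Suc (Suc m)) k j = w (Suc (t0 + Suc m)) k j" by simp
    also have "\<dots> = (\<lambda>i. w (t0 + Suc m) k j i - \<eta> * gg (t0 + Suc m) k i)"
      using update[OF Suc(3) assms(6), of "t0 + Suc m"] nd by (simp add: tdcd_state_def gg_def)
    also have "\<dots> = (\<lambda>i. c i - \<eta> * (\<Sum>\<tau>=t0..<t0 + Suc (Suc m). gg \<tau> k i))"
      using Suc by (simp add: algebra_simps)
    finally show ?case .
  qed
  define a where "a k i = (\<Sum>\<tau>=t0..<t. gg \<tau> k i)" for k i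
  have wt: "w t k j = (\<lambda>i. c i - \<eta> * a k i)" if "k < K" for k
    using IND[of "t - t0 - 1" k] that t0le assms(7) by (simp add: a_def)
  have cv: "cavg K (w t) j i = c i - \<eta> * ((1 / real K) * (\<Sum>k<K. a k i))" for i
  proof -
    have "cavg K (w t) j i = (1 / real K) * (\<Sum>k<K. c i - \<eta> * a k i)"
      unfolding cavg_def using wt by simp
    also have "\<dots> = c i - \<eta> * ((1 / real K) * (\<Sum>k<K. a k i))"
      using assms(2) by (simp add: sum_subtractf sum_distrib_left field_simps)
    finally show ?thesis .
  qed
  have pt: "(cavg K (w t) j i - w t k j i)\<^sup>2 = \<eta>\<^sup>2 * ((1 / real K) * (\<Sum>k<K. a k i) - a k i)\<^sup>2"
    if "k < K" for k i
  proof -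
    define M where "M = (1 / real K) * (\<Sum>k<K. a k i)"
    have "cavg K (w t) j i - w t k j i = c i - \<eta> * M - (c i - \<eta> * a k i)"
      using cv[of i] wt[OF that] M_def by simp
    also have "\<dots> = \<eta> * (a k i - M)" by (simp add: algebra_simps)
    finally have "cavg K (w t) j i - w t k j i = \<eta> * (a k i - M)" .
    then show ?thesis unfolding M_def[symmetric] by (simp add: power_mult_distrib power2_commute)
  qed
  have dev: "(\<Sum>k<K. sqnorm (D j) (\<lambda>i. cavg K (w t) j i - w t k j i))
      = \<eta>\<^sup>2 * (\<Sum>i<D j. \<Sum>k<K. ((1 / real K) * (\<Sum>k<K. a k i) - a k i)\<^sup>2)"
    unfolding sqnorm_def
    apply (subst sum.swap)
    apply (simp add: sum_distrib_left)
    apply (intro sum.cong refl)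
    apply (simp add: pt sum_divide_distrib)
    done
  have ak: "(a k i)\<^sup>2 \<le> real Q * (\<Sum>\<tau>=t0..<t. (gg \<tau> k i)\<^sup>2)" for k i
  proof -
    have "(a k i)\<^sup>2 \<le> (\<Sum>\<tau>=t0..<t. (gg \<tau> k i)\<^sup>2) * real (t - t0)"
      unfolding a_def using sum_squared_le_sum_of_squares[of "\<lambda>\<tau>. gg \<tau> k i" "{t0..<t}"] by simp
    also have "\<dots> \<le> (\<Sum>\<tau>=t0..<t. (gg \<tau> k i)\<^sup>2) * real Q"
      using tlt by (intro mult_left_mono) (auto intro: sum_nonneg)
    finally show ?thesis by (simp add: mult.commute)
  qed
  have "(\<Sum>i<D j. \<Sum>k<K. ((1 / real K) * (\<Sum>k<K. a k i) - a k i)\<^sup>2)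
      \<le> (\<Sum>i<D j. \<Sum>k<K. (a k i)\<^sup>2)"
    by (intro sum_mono var_le assms(2))
  also have "\<dots> \<le> (\<Sum>i<D j. \<Sum>k<K. real Q * (\<Sum>\<tau>=t0..<t. (gg \<tau> k i)\<^sup>2))"
    by (intro sum_mono ak)
  also have "\<dots> = (\<Sum>k<K. \<Sum>i<D j. real Q * (\<Sum>\<tau>=t0..<t. (gg \<tau> k i)\<^sup>2))"
    by (rule sum.swap)
  also have "\<dots> = (\<Sum>k<K. real Q * (\<Sum>i<D j. \<Sum>\<tau>=t0..<t. (gg \<tau> k i)\<^sup>2))"
    by (simp add: sum_distrib_left)
  also have "\<dots> = (\<Sum>k<K. real Q * (\<Sum>\<tau>=t0..<t. \<Sum>i<D j. (gg \<tau> k i)\<^sup>2))"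
    by (simp add: sum.swap[of _ "{..<D j}"])
  also have "\<dots> = real Q * (\<Sum>k<K. \<Sum>\<tau>=t0..<t. sqnorm (D j) (g \<tau> k j (tdcd_y Q K w \<tau> k j)))"
    by (simp add: sum_distrib_left sqnorm_def gg_def)
  finally have main: "(\<Sum>i<D j. \<Sum>k<K. ((1 / real K) * (\<Sum>k<K. a k i) - a k i)\<^sup>2)
      \<le> real Q * (\<Sum>k<K. \<Sum>\<tau>=t0..<t. sqnorm (D j) (g \<tau> k j (tdcd_y Q K w \<tau> k j)))" .
  show ?thesis
    unfolding dev using mult_left_mono[OF main, of "\<eta>\<^sup>2 / real K"] assms(2)
    by (simp add: field_simps)
qed

end
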